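(* Let $\sigma$ be a signature and $\mathcal F\in\mathbb F_\sigma$. (i) If $S,T$ are generalized causal teams over $\sigma$ with $T$ uniform and $T=T^{\mathcal F}$, then $S\models^g\Theta^{T^-}\wedge\Phi^{\mathcal F}$ iff $S\preccurlyeq T$. (ii) For any causal teams $S=(S^-,\mathcal G)$ and $T=(T^-,\mathcal F)$ over $\sigma$: $S\models^c\Theta^{T^-}\wedge\Phi^{\mathcal F}$ iff $S\preccurlyeq T$.
   Context: A signature $\sigma=(\mathrm{Dom},\mathrm{Ran})$: $\mathrm{Dom}$ nonempty finite set of variables, each with nonempty finite range $\mathrm{Ran}(X)$; $\mathbf X=\mathbf x$ abbreviates $X_1=x_1\wedge\dots\wedge X_n=x_n$ ($\mathbf x\in\prod\mathrm{Ran}(X_i)$), inconsistent if it contains $X=x,X=x'$ with $x\ne x'$. $\mathcal{CO}[\sigma]$: $\alpha::=X=x\mid\neg\alpha\mid\alpha\wedge\alpha\mid\alpha\vee\alpha\mid\mathbf X=\mathbf x\;\Box\!\!\rightarrow\alpha$; $\alpha\supset\beta$ abbreviates $\neg\alpha\vee\beta$; $\bot$ abbreviates $X=x\wedge\neg(X=x)$. Systems of functions $\mathcal F$: for each $V\in\mathrm{En}(\mathcal F)\subseteq\mathrm{Dom}$ parents $PA^{\mathcal F}_V\subseteq\mathrm{Dom}\setminus\{V\}$ and $\mathcal F_V:\mathrm{Ran}(PA^{\mathcal F}_V)\to\mathrm{Ran}(V)$; $\mathrm{Ex}(\mathcal F)=\mathrm{Dom}\setminus\mathrm{En}(\mathcal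 F)$; only recursive (acyclic parent graph), forming $\mathbb F_\sigma$. Assignments $s$ ($s(X)\in\mathrm{Ran}(X)$) form $\mathbb A_\sigma$; $s$ is compatible with $\mathcal F$ if $s(V)=\mathcal F_V(s(PA^{\mathcal F}_V))$ for $V\in\mathrm{En}(\mathcal F)$. For consistent $\mathbf X=\mathbf x$: $\mathcal F_{\mathbf X=\mathbf x}$ restricts $\mathcal F$ to $\mathrm{En}(\mathcal F)\setminus\mathbf X$; $s^{\mathcal F}_{\mathbf X=\mathbf x}$: $X_i\mapsto x_i$, $V\mapsto s(V)$ on $\mathrm{Ex}(\mathcal F)\setminus\mathbf X$, $V\mapsto\mathcal F_V(s^{\mathcal F}_{\mathbf X=\mathbf x}(PA^{\mathcal F}_V))$ on $\mathrm{En}(\mathcal F)\setminus\mathbf X$. Causal team $T=(T^-,\mathcal F)$ ($T^-$ a set of compatible assignments; all teams with empty team component identified as $\emptyset$); causal subteams $(S^-,\mathcal F)$, $S^-\subseteq T^-$ (and $\emptyset$); $T_{\mathbf X=\mathbf x}=(\{s^{\mathcal F}_{\mathbf X=\mathbf x}:s\in T^-\},\mathcal F_{\mathbf X=\mathbf x})$. $\models^c$: $T\models X=x$ iff $s(X)=x$ for all $s\in T^-$; $T\models\neg\alpha$ iff $(\{s\},\mathcal F)\not\models\alpha$ for all $s\in T^-$; $\wedge$ classical; $T\models\alpha\vee\beta$ iff causal subteams $T_1,T_2$ exist with $T_1^-\cup T_2^-=T^-$, $T_1\models\alpha$, $T_2\models\beta$; $T\models\mathbf X=\mathbf x\;\Box\!\!\rightarrow\alpha$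 iff $\mathbf X=\mathbf x$ inconsistent or $T_{\mathbf X=\mathbf x}\models\alpha$. Generalized causal team: a set $T$ of compatible pairs $(s,\mathcal F)$, $\mathcal F\in\mathbb F_\sigma$; subteams are subsets; $T^-=\{s:(s,\mathcal F)\in T\}$; $T_{\mathbf X=\mathbf x}=\{(s^{\mathcal F}_{\mathbf X=\mathbf x},\mathcal F_{\mathbf X=\mathbf x}):(s,\mathcal F)\in T\}$; $\models^g$: same clauses except $T\models\neg\alpha$ iff $\{(s,\mathcal F)\}\not\models\alpha$ for all $(s,\mathcal F)\in T$, and $T\models\alpha\vee\beta$ iff $T=T_1\cup T_2$ with $T_1\models\alpha$, $T_2\models\beta$. $\mathrm{Cn}(\mathcal F)=\{V\in\mathrm{En}(\mathcal F):\mathcal F_V\text{ constant}\}$; $\mathcal F_V\sim\mathcal G_V$ iff $\mathcal F_V(\mathbf x\mathbf y)=\mathcal G_V(\mathbf x\mathbf z)$ for all $\mathbf x\in\mathrm{Ran}(PA^{\mathcal F}_V\cap PA^{\mathcal G}_V)$, $\mathbf y\in\mathrm{Ran}(PA^{\mathcal F}_V\setminus PA^{\mathcal G}_V)$, $\mathbf z\in\mathrm{Ran}(PA^{\mathcal G}_V\setminus PA^{\mathcal F}_V)$; $\mathcal F\sim\mathcal G$ iff $\mathrm{En}(\mathcal F)\setminus\mathrm{Cn}(\mathcal F)=\mathrm{En}(\mathcal G)\setminus\mathrm{Cn}(\mathcal G)$ and $\mathcal F_V\sim\mathcal G_V$ for each such $V$. Nonempty causal teams: $(T^-,\mathcal F)\approx(S^-,\mathcal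 G)$ iff $T^-=S^-$ and $\mathcal F\sim\mathcal G$. Generalized: $T^{\mathcal F}=\{(s,\mathcal G)\in T:\mathcal G\sim\mathcal F\}$; $S\approx T$ iff $(S^{\mathcal F})^-=(T^{\mathcal F})^-$ for all $\mathcal F$; $T$ uniform iff $\mathcal F\sim\mathcal G$ for all $(s,\mathcal F),(t,\mathcal G)\in T$. $S\preccurlyeq T$ iff $S\approx R$ for some causal subteam $R$ of $T$; also $\emptyset\preccurlyeq T$ for every $T$. $\Theta^{T^-}:=\bigvee_{s\in T^-}\bigwedge_{V\in\mathrm{Dom}}V=s(V)$ (equal to $\bot$ if $T^-=\emptyset$). With $\mathbf W_V$ listing $\mathrm{Dom}\setminus\{V\}$: $\Phi^{\mathcal F}:=\bigwedge_{V\in\mathrm{En}(\mathcal F)\setminus\mathrm{Cn}(\mathcal F)}\eta(V)\wedge\bigwedge_{V\notin\mathrm{En}(\mathcal F)\setminus\mathrm{Cn}(\mathcal F)}\xi(V)$, where $\eta(V)$ is the conjunction of all $(\mathbf W=\mathbf w\wedge PA^{\mathcal F}_V=\mathbf p)\;\Box\!\!\rightarrow V=\mathcal F_V(\mathbf p)$ ($\mathbf W$ listing $\mathrm{Dom}\setminus(PA^{\mathcal F}_V\cup\{V\})$, $\mathbf w\in\mathrm{Ran}(\mathbf W)$, $\mathbf p\in\mathrm{Ran}(PA^{\mathcal F}_V)$) and $\xi(V)$ is the conjunction of all $V=v\supset(\mathbf W_V=\mathbf w\;\Box\!\!\rightarrow V=v)$ ($v\in\mathrm{Ran}(V)$, $\mathbf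 w\in\mathrm{Ran}(\mathbf W_V)$). *)

theory Defs
  imports "HOL-Library.FuncSet"
begin

definition wf_sig :: "'v set \<Rightarrow> ('v \<Rightarrow> 'a set) \<Rightarrow> bool" where
  "wf_sig Dom Ran \<longleftrightarrow> finite Dom \<and> Dom \<noteq> {} \<and> (\<forall>X\<in>Dom. finite (Ran X) \<and> Ran X \<noteq> {})"

text \<open>Assignments are the elements of PiE Dom Ran (extensional outside Dom).\<close>

record ('v, 'a) sys =
  En :: "'v set"
  PA :: "'v \<Rightarrow> 'v set"
  Fn :: "'v \<Rightarrow> ('v \<Rightarrow> 'a) \<Rightarrow> 'a"

text \<open>A (recursive) system of functions; the function of V is applied to assignments
  of its parents (elements of PiE (PA V) Ran). Representation is made canonical.\<close>

definition wf_sys :: "'v set \<Rightarrow> ('v \<Rightarrow> 'a set) \<Rightarrow> ('v, 'a) sys \<Rightarrow> bool" where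
  "wf_sys Dom Ran F \<longleftrightarrow>
     En F \<subseteq> Dom
   \<and> (\<forall>V\<in>En F. PA F V \<subseteq> Dom - {V})
   \<and> (\<forall>V\<in>En F. \<forall>p\<in>PiE (PA F V) Ran. Fn F V p \<in> Ran V)
   \<and> acyclic {(P, V). V \<in> En F \<and> P \<in> PA F V}
   \<and> (\<forall>V. V \<notin> En F \<longrightarrow> PA F V = {} \<and> Fn F V = undefined)
   \<and> (\<forall>V\<in>En F. \<forall>p. p \<notin> PiE (PA F V) Ran \<longrightarrow> Fn F V p = undefined)"

definition compatible :: "('v, 'a) sys \<Rightarrow> ('v \<Rightarrow> 'a) \<Rightarrow> bool" where
  "compatible F s \<longleftrightarrow> (\<forall>V\<in>En F. s V = Fn F V (restrict s (PA F V)))"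

text \<open>An antecedent X1=x1 and ... and Xn=xn is a list of pairs.\<close>

definition consistent :: "('v \<times> 'a) list \<Rightarrow> bool" where
  "consistent xs \<longleftrightarrow> (\<forall>(X, x)\<in>set xs. \<forall>(Y, y)\<in>set xs. X = Y \<longrightarrow> x = y)"

definition ivars :: "('v \<times> 'a) list \<Rightarrow> 'v set" where
  "ivars xs = fst ` set xs"

definition interv_asg :: "'v set \<Rightarrow> ('v \<Rightarrow> 'a set) \<Rightarrow> ('v, 'a) sys \<Rightarrow> ('v \<times> 'a) list
    \<Rightarrow> ('v \<Rightarrow> 'a) \<Rightarrow> ('v \<Rightarrow> 'a)" where
  "interv_asg Dom Ran F xs s = (THE t. t \<in> PiE Dom Ran
      \<and> (\<forall>(X, x)\<in>set xs. t X = x)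
      \<and> (\<forall>V\<in>Dom - En F - ivars xs. t V = s V)
      \<and> (\<forall>V\<in>En F - ivars xs. t V = Fn F V (restrict t (PA F V))))"

definition interv_sys :: "('v, 'a) sys \<Rightarrow> ('v \<times> 'a) list \<Rightarrow> ('v, 'a) sys" where
  "interv_sys F xs =
     \<lparr> En = En F - ivars xs,
       PA = (\<lambda>V. if V \<in> En F - ivars xs then PA F V else {}),
       Fn = (\<lambda>V. if V \<in> En F - ivars xs then Fn F V else undefined) \<rparr>"

datatype ('v, 'a) fm =
    Eq 'v 'a
  | Neg "('v, 'a) fm"
  | Conj "('v, 'a) fm" "('v, 'a) fm"
  | Disj "('v, 'a) fm" "('v, 'a) fm"
  | Cf "('v \<times> 'a) list" "('v, 'a) fm"

definition Imp :: "('v, 'a) fm \<Rightarrow> ('v, 'a) fm \<Rightarrow> ('v, 'a) fm" where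
  "Imp a b = Disj (Neg a) b"

definition Bot :: "'v set \<Rightarrow> ('v \<Rightarrow> 'a set) \<Rightarrow> ('v, 'a) fm" where
  "Bot Dom Ran = (let X = (SOME X. X \<in> Dom); x = (SOME x. x \<in> Ran X)
                  in Conj (Eq X x) (Neg (Eq X x)))"

definition Top :: "'v set \<Rightarrow> ('v \<Rightarrow> 'a set) \<Rightarrow> ('v, 'a) fm" where
  "Top Dom Ran = Neg (Bot Dom Ran)"

definition list_of :: "'b set \<Rightarrow> 'b list" where
  "list_of A = (SOME xs. set xs = A \<and> distinct xs)"

fun BigConj :: "'v set \<Rightarrow> ('v \<Rightarrow> 'a set) \<Rightarrow> ('v, 'a) fm list \<Rightarrow> ('v, 'a) fm" where
  "BigConj Dom Ran [] = Top Dom Ran"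
| "BigConj Dom Ran [a] = a"
| "BigConj Dom Ran (a # as) = Conj a (BigConj Dom Ran as)"

fun BigDisj :: "'v set \<Rightarrow> ('v \<Rightarrow> 'a set) \<Rightarrow> ('v, 'a) fm list \<Rightarrow> ('v, 'a) fm" where
  "BigDisj Dom Ran [] = Bot Dom Ran"
| "BigDisj Dom Ran [a] = a"
| "BigDisj Dom Ran (a # as) = Disj a (BigDisj Dom Ran as)"

definition ConjSet :: "'v set \<Rightarrow> ('v \<Rightarrow> 'a set) \<Rightarrow> ('v, 'a) fm set \<Rightarrow> ('v, 'a) fm" where
  "ConjSet Dom Ran A = BigConj Dom Ran (list_of A)"

definition DisjSet :: "'v set \<Rightarrow> ('v \<Rightarrow> 'a set) \<Rightarrow> ('v, 'a) fm set \<Rightarrow> ('v, 'a) fm" where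
  "DisjSet Dom Ran A = BigDisj Dom Ran (list_of A)"

definition ante :: "'v set \<Rightarrow> ('v \<Rightarrow> 'a) \<Rightarrow> ('v \<times> 'a) list" where
  "ante W w = map (\<lambda>X. (X, w X)) (list_of W)"

text \<open>Causal teams: pairs (T-, F); generalized causal teams: sets of pairs (s, F).\<close>

fun sat_c :: "'v set \<Rightarrow> ('v \<Rightarrow> 'a set) \<Rightarrow> ('v \<Rightarrow> 'a) set \<times> ('v, 'a) sys \<Rightarrow> ('v, 'a) fm \<Rightarrow> bool" where
  "sat_c Dom Ran (T, F) (Eq X x) \<longleftrightarrow> (\<forall>s\<in>T. s X = x)"
| "sat_c Dom Ran (T, F) (Neg a) \<longleftrightarrow> (\<forall>s\<in>T. \<not> sat_c Dom Ran ({s}, F) a)"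
| "sat_c Dom Ran (T, F) (Conj a b) \<longleftrightarrow> sat_c Dom Ran (T, F) a \<and> sat_c Dom Ran (T, F) b"
| "sat_c Dom Ran (T, F) (Disj a b) \<longleftrightarrow>
     (\<exists>T1 T2. T1 \<subseteq> T \<and> T2 \<subseteq> T \<and> T1 \<union> T2 = T \<and> sat_c Dom Ran (T1, F) a \<and> sat_c Dom Ran (T2, F) b)"
| "sat_c Dom Ran (T, F) (Cf xs a) \<longleftrightarrow>
     (\<not> consistent xs \<or> sat_c Dom Ran (interv_asg Dom Ran F xs ` T, interv_sys F xs) a)"

definition interv_g :: "'v set \<Rightarrow> ('v \<Rightarrow> 'a set) \<Rightarrow> (('v \<Rightarrow> 'a) \<times> ('v, 'a) sys) set
    \<Rightarrow> ('v \<times> 'a) list \<Rightarrow> (('v \<Rightarrow> 'a) \<times> ('v, 'a) sys) set" where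
  "interv_g Dom Ran T xs = (\<lambda>(s, F). (interv_asg Dom Ran F xs s, interv_sys F xs)) ` T"

fun sat_g :: "'v set \<Rightarrow> ('v \<Rightarrow> 'a set) \<Rightarrow> (('v \<Rightarrow> 'a) \<times> ('v, 'a) sys) set \<Rightarrow> ('v, 'a) fm \<Rightarrow> bool" where
  "sat_g Dom Ran T (Eq X x) \<longleftrightarrow> (\<forall>(s, F)\<in>T. s X = x)"
| "sat_g Dom Ran T (Neg a) \<longleftrightarrow> (\<forall>p\<in>T. \<not> sat_g Dom Ran {p} a)"
| "sat_g Dom Ran T (Conj a b) \<longleftrightarrow> sat_g Dom Ran T a \<and> sat_g Dom Ran T b"
| "sat_g Dom Ran T (Disj a b) \<longleftrightarrow>
     (\<exists>T1 T2. T1 \<union> T2 = T \<and> sat_g Dom Ran T1 a \<and> sat_g Dom Ran T2 b)"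
| "sat_g Dom Ran T (Cf xs a) \<longleftrightarrow>
     (\<not> consistent xs \<or> sat_g Dom Ran (interv_g Dom Ran T xs) a)"

definition cteam :: "'v set \<Rightarrow> ('v \<Rightarrow> 'a set) \<Rightarrow> ('v \<Rightarrow> 'a) set \<times> ('v, 'a) sys \<Rightarrow> bool" where
  "cteam Dom Ran T \<longleftrightarrow> wf_sys Dom Ran (snd T) \<and>
     (\<forall>s\<in>fst T. s \<in> PiE Dom Ran \<and> compatible (snd T) s)"

definition gteam :: "'v set \<Rightarrow> ('v \<Rightarrow> 'a set) \<Rightarrow> (('v \<Rightarrow> 'a) \<times> ('v, 'a) sys) set \<Rightarrow> bool" where
  "gteam Dom Ran T \<longleftrightarrow> (\<forall>(s, F)\<in>T. wf_sys Dom Ran F \<and> s \<in> PiE Dom Ran \<and> compatible F s)"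

definition tminus :: "(('v \<Rightarrow> 'a) \<times> ('v, 'a) sys) set \<Rightarrow> ('v \<Rightarrow> 'a) set" where
  "tminus T = fst ` T"

definition Cn :: "('v \<Rightarrow> 'a set) \<Rightarrow> ('v, 'a) sys \<Rightarrow> 'v set" where
  "Cn Ran F = {V \<in> En F. \<exists>c. \<forall>p\<in>PiE (PA F V) Ran. Fn F V p = c}"

definition sim_fun :: "('v \<Rightarrow> 'a set) \<Rightarrow> ('v, 'a) sys \<Rightarrow> ('v, 'a) sys \<Rightarrow> 'v \<Rightarrow> bool" where
  "sim_fun Ran F G V \<longleftrightarrow>
     (\<forall>p\<in>PiE (PA F V) Ran. \<forall>q\<in>PiE (PA G V) Ran.
        (\<forall>X\<in>PA F V \<inter> PA G V. p X = q X) \<longrightarrow> Fn F V p = Fn G V q)"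

definition sim :: "('v \<Rightarrow> 'a set) \<Rightarrow> ('v, 'a) sys \<Rightarrow> ('v, 'a) sys \<Rightarrow> bool" where
  "sim Ran F G \<longleftrightarrow> En F - Cn Ran F = En G - Cn Ran G \<and>
     (\<forall>V\<in>En F - Cn Ran F. sim_fun Ran F G V)"

text \<open>Causal teams (the empty causal teams are all identified).\<close>
definition approx_c :: "('v \<Rightarrow> 'a set) \<Rightarrow> ('v \<Rightarrow> 'a) set \<times> ('v, 'a) sys
    \<Rightarrow> ('v \<Rightarrow> 'a) set \<times> ('v, 'a) sys \<Rightarrow> bool" where
  "approx_c Ran T S \<longleftrightarrow> fst T \<noteq> {} \<and> fst S \<noteq> {} \<and> fst T = fst S \<and> sim Ran (snd T) (snd S)"

definition preceq_c :: "('v \<Rightarrow> 'a set) \<Rightarrow> ('v \<Rightarrow> 'a) set \<times> ('v, 'a) sys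
    \<Rightarrow> ('v \<Rightarrow> 'a) set \<times> ('v, 'a) sys \<Rightarrow> bool" where
  "preceq_c Ran S T \<longleftrightarrow> fst S = {} \<or> (\<exists>R. R \<subseteq> fst T \<and> approx_c Ran S (R, snd T))"

definition restr_sim :: "('v \<Rightarrow> 'a set) \<Rightarrow> (('v \<Rightarrow> 'a) \<times> ('v, 'a) sys) set \<Rightarrow> ('v, 'a) sys
    \<Rightarrow> (('v \<Rightarrow> 'a) \<times> ('v, 'a) sys) set" where
  "restr_sim Ran T F = {(s, G) \<in> T. sim Ran G F}"

definition approx_g :: "'v set \<Rightarrow> ('v \<Rightarrow> 'a set) \<Rightarrow> (('v \<Rightarrow> 'a) \<times> ('v, 'a) sys) set
    \<Rightarrow> (('v \<Rightarrow> 'a) \<times> ('v, 'a) sys) set \<Rightarrow> bool" where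
  "approx_g Dom Ran S T \<longleftrightarrow>
     (\<forall>F. wf_sys Dom Ran F \<longrightarrow> tminus (restr_sim Ran S F) = tminus (restr_sim Ran T F))"

definition uniform :: "('v \<Rightarrow> 'a set) \<Rightarrow> (('v \<Rightarrow> 'a) \<times> ('v, 'a) sys) set \<Rightarrow> bool" where
  "uniform Ran T \<longleftrightarrow> (\<forall>(s, F)\<in>T. \<forall>(t, G)\<in>T. sim Ran F G)"

definition preceq_g :: "'v set \<Rightarrow> ('v \<Rightarrow> 'a set) \<Rightarrow> (('v \<Rightarrow> 'a) \<times> ('v, 'a) sys) set
    \<Rightarrow> (('v \<Rightarrow> 'a) \<times> ('v, 'a) sys) set \<Rightarrow> bool" where
  "preceq_g Dom Ran S T \<longleftrightarrow> S = {} \<or> (\<exists>R. R \<subseteq> T \<and> approx_g Dom Ran S R)"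

definition Theta :: "'v set \<Rightarrow> ('v \<Rightarrow> 'a set) \<Rightarrow> ('v \<Rightarrow> 'a) set \<Rightarrow> ('v, 'a) fm" where
  "Theta Dom Ran T = DisjSet Dom Ran
     ((\<lambda>s. ConjSet Dom Ran ((\<lambda>V. Eq V (s V)) ` Dom)) ` T)"

definition eta :: "'v set \<Rightarrow> ('v \<Rightarrow> 'a set) \<Rightarrow> ('v, 'a) sys \<Rightarrow> 'v \<Rightarrow> ('v, 'a) fm" where
  "eta Dom Ran F V = ConjSet Dom Ran
     {Cf (ante (Dom - (PA F V \<union> {V})) w @ ante (PA F V) p) (Eq V (Fn F V p)) | w p.
        w \<in> PiE (Dom - (PA F V \<union> {V})) Ran \<and> p \<in> PiE (PA F V) Ran}"

definition xi :: "'v set \<Rightarrow> ('v \<Rightarrow> 'a set) \<Rightarrow> 'v \<Rightarrow> ('v, 'a) fm" where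
  "xi Dom Ran V = ConjSet Dom Ran
     {Imp (Eq V v) (Cf (ante (Dom - {V}) w) (Eq V v)) | v w.
        v \<in> Ran V \<and> w \<in> PiE (Dom - {V}) Ran}"

definition Phi :: "'v set \<Rightarrow> ('v \<Rightarrow> 'a set) \<Rightarrow> ('v, 'a) sys \<Rightarrow> ('v, 'a) fm" where
  "Phi Dom Ran F = Conj
     (ConjSet Dom Ran (eta Dom Ran F ` (En F - Cn Ran F)))
     (ConjSet Dom Ran (xi Dom Ran ` (Dom - (En F - Cn Ran F))))"

end

theory Submission
  imports Defs
begin

lemma list_of_set: "finite A \<Longrightarrow> set (list_of A) = A"
  unfolding list_of_def by (metis (mono_tags, lifting) finite_distinct_list someI_ex)

lemma set_ante: "finite W \<Longrightarrow> set (ante W w) = (\<lambda>X. (X, w X)) ` W"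
  by (simp add: ante_def list_of_set)

lemma sat_g_empty: "sat_g Dom Ran {} phi"
  by (induction phi) (auto simp: interv_g_def)

lemma sat_Bot: "sat_g Dom Ran S (Bot Dom Ran) \<longleftrightarrow> S = {}"
  by (auto simp: Bot_def Let_def)

lemma sat_Top: "sat_g Dom Ran S (Top Dom Ran)"
  by (simp add: Top_def sat_Bot)

lemma sat_BigConj: "sat_g Dom Ran S (BigConj Dom Ran fs) \<longleftrightarrow> (\<forall>f\<in>set fs. sat_g Dom Ran S f)"
  by (induction Dom Ran fs rule: BigConj.induct) (simp_all add: sat_Top)

lemma sat_ConjSet: "finite A \<Longrightarrow> sat_g Dom Ran S (ConjSet Dom Ran A) \<longleftrightarrow> (\<forall>a\<in>A. sat_g Dom Ran S a)"
  by (simp add: ConjSet_def sat_BigConj list_of_set)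


lemma sat_BigDisj:
  assumes "\<forall>f\<in>set fs. \<forall>S. sat_g Dom Ran S f \<longleftrightarrow> (\<forall>p\<in>S. sat_g Dom Ran {p} f)"
  shows "sat_g Dom Ran S (BigDisj Dom Ran fs) \<longleftrightarrow> (\<forall>p\<in>S. \<exists>f\<in>set fs. sat_g Dom Ran {p} f)"
  using assms
proof (induction Dom Ran fs arbitrary: S rule: BigDisj.induct)
  case (1 Dom Ran)
  have "S = {} \<longleftrightarrow> (\<forall>p\<in>S. False)" by blast
  then show ?case by (simp only: BigDisj.simps list.set sat_Bot bex_empty)
next
  case (2 Dom Ran a)
  have fa: "sat_g Dom Ran S a \<longleftrightarrow> (\<forall>p\<in>S. sat_g Dom Ran {p} a)" using "2" by (meson list.set_intros(1))
  show ?case using fa by (simp only: BigDisj.simps list.set) blast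
next
  case (3 Dom Ran a b rest)
  have fa: "\<And>S. sat_g Dom Ran S a \<longleftrightarrow> (\<forall>p\<in>S. sat_g Dom Ran {p} a)" using "3.prems" by (meson list.set_intros(1))
  have pr: "\<forall>f\<in>set (b # rest). \<forall>S. sat_g Dom Ran S f \<longleftrightarrow> (\<forall>p\<in>S. sat_g Dom Ran {p} f)"
    using "3.prems" by (metis list.set_intros(2))
  have IH: "\<And>S. sat_g Dom Ran S (BigDisj Dom Ran (b # rest)) \<longleftrightarrow> (\<forall>p\<in>S. \<exists>f\<in>set (b # rest). sat_g Dom Ran {p} f)"
    using "3.IH"[OF pr] by blast
  let ?T1 = "{p\<in>S. sat_g Dom Ran {p} a}"
  let ?T2 = "S - ?T1"
  show ?case
  proof
    assume "sat_g Dom Ran S (BigDisj Dom Ran (a # b # rest))"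
    then obtain T1 T2 where U: "T1 \<union> T2 = S" "sat_g Dom Ran T1 a" "sat_g Dom Ran T2 (BigDisj Dom Ran (b # rest))"
      by (simp only: BigDisj.simps sat_g.simps) blast
    show "\<forall>p\<in>S. \<exists>f\<in>set (a # b # rest). sat_g Dom Ran {p} f"
    proof
      fix p assume "p \<in> S"
      then have "p \<in> T1 \<or> p \<in> T2" using U(1) by blast
      then show "\<exists>f\<in>set (a # b # rest). sat_g Dom Ran {p} f"
      proof
        assume "p \<in> T1" then show ?thesis using U(2) fa[of T1] by simp
      next
        assume "p \<in> T2" then show ?thesis using U(3) IH[of T2] by simp
      qed
    qed
  next
    assume H: "\<forall>p\<in>S. \<exists>f\<in>set (a # b # rest). sat_g Dom Ran {p} f"
    have 1: "sat_g Dom Ran ?T1 a" using fa[of ?T1] by blast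
    have "\<forall>p\<in>?T2. \<exists>f\<in>set (b # rest). sat_g Dom Ran {p} f"
    proof
      fix p assume p: "p \<in> ?T2"
      then have "p \<in> S" "\<not> sat_g Dom Ran {p} a" by auto
      then obtain f where f: "f \<in> set (a # b # rest)" "sat_g Dom Ran {p} f" using H by meson
      then have "f \<noteq> a" using \<open>\<not> sat_g Dom Ran {p} a\<close> by metis
      then have "f \<in> set (b # rest)" using f(1) by (simp only: list.set insert_iff) simp
      then show "\<exists>f\<in>set (b # rest). sat_g Dom Ran {p} f" using f(2) by blast
    qed
    then have 2: "sat_g Dom Ran ?T2 (BigDisj Dom Ran (b # rest))" using IH[of ?T2] by blast
    have 3: "?T1 \<union> ?T2 = S" by blast
    show "sat_g Dom Ran S (BigDisj Dom Ran (a # b # rest))"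
      using 1 2 3 by (simp only: BigDisj.simps sat_g.simps) blast
  qed
qed

lemma sat_c_g: "sat_c Dom Ran (T, F) phi \<longleftrightarrow> sat_g Dom Ran ((\<lambda>s. (s, F)) ` T) phi"
proof (induction phi arbitrary: T F)
  case (Disj a b)
  show ?case
  proof
    assume "sat_c Dom Ran (T, F) (Disj a b)"
    then obtain T1 T2 where "T1 \<union> T2 = T" "sat_c Dom Ran (T1, F) a" "sat_c Dom Ran (T2, F) b" by auto
    have "(\<lambda>s. (s, F)) ` T1 \<union> (\<lambda>s. (s, F)) ` T2 = (\<lambda>s. (s, F)) ` T" using \<open>T1 \<union> T2 = T\<close> by (metis image_Un)
    moreover have "sat_g Dom Ran ((\<lambda>s. (s, F)) ` T1) a" using Disj.IH(1) \<open>sat_c Dom Ran (T1, F) a\<close> by blast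
    moreover have "sat_g Dom Ran ((\<lambda>s. (s, F)) ` T2) b" using Disj.IH(2) \<open>sat_c Dom Ran (T2, F) b\<close> by blast
    ultimately show "sat_g Dom Ran ((\<lambda>s. (s, F)) ` T) (Disj a b)" by (simp only: sat_g.simps) blast
  next
    assume "sat_g Dom Ran ((\<lambda>s. (s, F)) ` T) (Disj a b)"
    then obtain T1 T2 where U: "T1 \<union> T2 = (\<lambda>s. (s, F)) ` T" "sat_g Dom Ran T1 a" "sat_g Dom Ran T2 b" by auto
    have e1: "T1 = (\<lambda>s. (s, F)) ` (fst ` T1)" using U(1) by force
    have e2: "T2 = (\<lambda>s. (s, F)) ` (fst ` T2)" using U(1) by force
    have "fst ` T1 \<union> fst ` T2 = T" using U(1) by force
    have "fst ` T1 \<subseteq> T" "fst ` T2 \<subseteq> T" using \<open>fst ` T1 \<union> fst ` T2 = T\<close> by auto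
    moreover have "sat_g Dom Ran ((\<lambda>s. (s, F)) ` (fst ` T1)) a" using e1 U(2) by (rule subst)
    then have "sat_c Dom Ran (fst ` T1, F) a" using Disj.IH(1) by blast
    moreover have "sat_g Dom Ran ((\<lambda>s. (s, F)) ` (fst ` T2)) b" using e2 U(3) by (rule subst)
    then have "sat_c Dom Ran (fst ` T2, F) b" using Disj.IH(2) by blast
    ultimately show "sat_c Dom Ran (T, F) (Disj a b)" using \<open>fst ` T1 \<union> fst ` T2 = T\<close>
      by (simp only: sat_c.simps) blast
  qed
next
  case (Cf xs a)
  have "interv_g Dom Ran ((\<lambda>s. (s, F)) ` T) xs = (\<lambda>s. (s, interv_sys F xs)) ` (interv_asg Dom Ran F xs ` T)"
    by (auto simp: interv_g_def)
  then show ?case using Cf.IH by simp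
qed auto

lemma wf_sysD:
  assumes "wf_sys Dom Ran F"
  shows "En F \<subseteq> Dom" "\<And>V. V \<in> En F \<Longrightarrow> PA F V \<subseteq> Dom - {V}"
    "\<And>V p. V \<in> En F \<Longrightarrow> p \<in> PiE (PA F V) Ran \<Longrightarrow> Fn F V p \<in> Ran V"
  using assms unfolding wf_sys_def by blast+

lemma ext2:
  assumes "p \<in> PiE A Ran" "q \<in> PiE C Ran" "\<forall>X\<in>A \<inter> C. p X = q X" "A \<subseteq> B" "C \<subseteq> B"
    "\<forall>X\<in>B. Ran X \<noteq> {}"
  shows "\<exists>u\<in>PiE B Ran. restrict u A = p \<and> restrict u C = q"
proof -
  define u where "u = (\<lambda>X. if X \<in> A then p X else if X \<in> C then q X else if X \<in> B then (SOME x. x \<in> Ran X) else undefined)"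
  have "u \<in> PiE B Ran"
    using assms unfolding u_def PiE_iff by (auto simp: extensional_def some_in_eq)
  moreover have "restrict u A = p"
    using assms(1) unfolding u_def by (auto simp: restrict_def PiE_iff extensional_def)
  moreover have "restrict u C = q"
    using assms(2,3) unfolding u_def by (auto simp: restrict_def PiE_iff extensional_def)
  ultimately show ?thesis by blast
qed

lemma ext1:
  assumes "q \<in> PiE C Ran" "C \<subseteq> B" "\<forall>X\<in>B. Ran X \<noteq> {}"
  shows "\<exists>u\<in>PiE B Ran. restrict u C = q"
  using ext2[of q C Ran q C B] assms by blast

lemma sim_refl: "sim Ran F F"
  unfolding sim_def sim_fun_def by (metis IntI PiE_ext)

lemma sim_sym: "sim Ran F G \<Longrightarrow> sim Ran G F"
  unfolding sim_def sim_fun_def by (metis Int_commute)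

lemma sim_trans:
  assumes sig: "wf_sig Dom Ran" and G: "wf_sys Dom Ran G"
    and FG: "sim Ran F G" and GH: "sim Ran G H"
  shows "sim Ran F H"
  unfolding sim_def
proof (intro conjI ballI)
  show "En F - Cn Ran F = En H - Cn Ran H" using FG GH unfolding sim_def by blast
  fix V assume V: "V \<in> En F - Cn Ran F"
  then have VG: "V \<in> En G - Cn Ran G" using FG unfolding sim_def by blast
  then have VH: "V \<in> En H - Cn Ran H" using GH unfolding sim_def by blast
  have fFG: "sim_fun Ran F G V" using FG V unfolding sim_def by blast
  have fGH: "sim_fun Ran G H V" using GH VG unfolding sim_def by blast
  show "sim_fun Ran F H V"
    unfolding sim_fun_def
  proof (intro ballI impI)
    fix p r assume p: "p \<in> PiE (PA F V) Ran" and r: "r \<in> PiE (PA H V) Ran"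
      and agr: "\<forall>X\<in>PA F V \<inter> PA H V. p X = r X"
    define q where "q = (\<lambda>X. if X \<in> PA G V then (if X \<in> PA F V then p X else if X \<in> PA H V then r X else (SOME x. x \<in> Ran X)) else undefined)"
    have PG: "PA G V \<subseteq> Dom" using wf_sysD(2)[OF G] VG by blast
    have ne: "\<forall>X\<in>Dom. Ran X \<noteq> {}" using sig unfolding wf_sig_def by blast
    have q: "q \<in> PiE (PA G V) Ran"
      using p r PG ne unfolding q_def PiE_iff by (auto simp: extensional_def some_in_eq)
    have "Fn F V p = Fn G V q"
      using fFG p q unfolding sim_fun_def q_def by auto
    also have "\<dots> = Fn H V r"
      using fGH q r agr unfolding sim_fun_def q_def by auto
    finally show "Fn F V p = Fn H V r" .
  qed
qed

definition rv :: "('v, 'a) sys \<Rightarrow> ('v \<Rightarrow> 'a) \<Rightarrow> ('v \<Rightarrow> 'a) \<Rightarrow> 'v \<Rightarrow> 'a" where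
  "rv G s u V = (if V \<in> En G then Fn G V (restrict u (PA G V)) else s V)"

lemma interv_all_but:
  assumes G: "wf_sys Dom Ran G" and V: "V \<in> Dom" and u: "u \<in> PiE (Dom - {V}) Ran"
    and xs: "set xs = (\<lambda>X. (X, u X)) ` (Dom - {V})" and s: "s \<in> PiE Dom Ran"
  shows "interv_asg Dom Ran G xs s = u(V := rv G s u V)"
proof -
  have iv: "ivars xs = Dom - {V}" using xs unfolding ivars_def by force
  let ?t0 = "u(V := rv G s u V)"
  have rvR: "rv G s u V \<in> Ran V"
  proof (cases "V \<in> En G")
    case True
    then have "PA G V \<subseteq> Dom - {V}" using wf_sysD(2)[OF G] by blast
    then have "restrict u (PA G V) \<in> PiE (PA G V) Ran" using u by (auto simp: PiE_iff)
    then show ?thesis using True wf_sysD(3)[OF G] unfolding rv_def by simp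
  next
    case False then show ?thesis using s V unfolding rv_def by (auto simp: PiE_iff)
  qed
  have P: "?t0 \<in> PiE Dom Ran
      \<and> (\<forall>(X, x)\<in>set xs. ?t0 X = x)
      \<and> (\<forall>W\<in>Dom - En G - ivars xs. ?t0 W = s W)
      \<and> (\<forall>W\<in>En G - ivars xs. ?t0 W = Fn G W (restrict ?t0 (PA G W)))"
  proof (intro conjI)
    show "?t0 \<in> PiE Dom Ran" using u rvR V by (auto simp: PiE_iff extensional_def)
    show "\<forall>(X, x)\<in>set xs. ?t0 X = x" using xs by auto
    show "\<forall>W\<in>Dom - En G - ivars xs. ?t0 W = s W" using iv by (auto simp: rv_def)
    show "\<forall>W\<in>En G - ivars xs. ?t0 W = Fn G W (restrict ?t0 (PA G W))"
    proof
      fix W assume W: "W \<in> En G - ivars xs"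
      then have WV: "W = V" using iv wf_sysD(1)[OF G] by blast
      have "PA G V \<subseteq> Dom - {V}" using wf_sysD(2)[OF G] W WV by blast
      then have "restrict ?t0 (PA G V) = restrict u (PA G V)" by (auto simp: restrict_def fun_eq_iff)
      then show "?t0 W = Fn G W (restrict ?t0 (PA G W))" using W WV by (simp add: rv_def)
    qed
  qed
  show ?thesis
    unfolding interv_asg_def
  proof (rule the_equality)
    show "?t0 \<in> PiE Dom Ran
      \<and> (\<forall>(X, x)\<in>set xs. ?t0 X = x)
      \<and> (\<forall>W\<in>Dom - En G - ivars xs. ?t0 W = s W)
      \<and> (\<forall>W\<in>En G - ivars xs. ?t0 W = Fn G W (restrict ?t0 (PA G W)))" by (rule P)
    fix t assume T: "t \<in> PiE Dom Ran
      \<and> (\<forall>(X, x)\<in>set xs. t X = x)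
      \<and> (\<forall>W\<in>Dom - En G - ivars xs. t W = s W)
      \<and> (\<forall>W\<in>En G - ivars xs. t W = Fn G W (restrict t (PA G W)))"
    have tu: "\<forall>X\<in>Dom - {V}. t X = u X" using T xs by auto
    show "t = ?t0"
    proof
      fix X
      show "t X = ?t0 X"
      proof (cases "X \<in> Dom")
        case False
        then show ?thesis using T u V by (auto simp: PiE_iff extensional_def)
      next
        case True
        show ?thesis
        proof (cases "X = V")
          case False then show ?thesis using tu True by simp
        next
          case XV: True
          show ?thesis
          proof (cases "V \<in> En G")
            case True
            have "PA G V \<subseteq> Dom - {V}" using wf_sysD(2)[OF G] True by blast
            then have "restrict t (PA G V) = restrict u (PA G V)" using tu by (auto simp: restrict_def fun_eq_iff)
            moreover have "t V = Fn G V (restrict t (PA G V))" using T True iv by auto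
            ultimately show ?thesis using XV True by (simp add: rv_def)
          next
            case False
            then show ?thesis using T XV V iv by (auto simp: rv_def)
          qed
        qed
      qed
    qed
  qed
qed

lemma point_char:
  assumes sig: "wf_sig Dom Ran" and F: "wf_sys Dom Ran F" and G: "wf_sys Dom Ran G"
    and s: "s \<in> PiE Dom Ran" and cs: "compatible G s"
  shows "((\<forall>V\<in>En F - Cn Ran F. \<forall>u\<in>PiE (Dom - {V}) Ran. rv G s u V = Fn F V (restrict u (PA F V)))
        \<and> (\<forall>V\<in>Dom - (En F - Cn Ran F). \<forall>u\<in>PiE (Dom - {V}) Ran. rv G s u V = s V))
      \<longleftrightarrow> sim Ran G F"
proof
  have ne: "\<forall>X\<in>Dom. Ran X \<noteq> {}" using sig unfolding wf_sig_def by blast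
  have ne': "\<And>V. \<forall>X\<in>Dom - {V}. Ran X \<noteq> {}" using ne by blast
  assume "(\<forall>V\<in>En F - Cn Ran F. \<forall>u\<in>PiE (Dom - {V}) Ran. rv G s u V = Fn F V (restrict u (PA F V)))
        \<and> (\<forall>V\<in>Dom - (En F - Cn Ran F). \<forall>u\<in>PiE (Dom - {V}) Ran. rv G s u V = s V)"
  then have A: "\<And>V u. V \<in> En F - Cn Ran F \<Longrightarrow> u \<in> PiE (Dom - {V}) Ran \<Longrightarrow> rv G s u V = Fn F V (restrict u (PA F V))"
    and B: "\<And>V u. V \<in> Dom \<Longrightarrow> V \<notin> En F - Cn Ran F \<Longrightarrow> u \<in> PiE (Dom - {V}) Ran \<Longrightarrow> rv G s u V = s V"
    by blast+
  have 1: "En G - Cn Ran G \<subseteq> En F - Cn Ran F"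
  proof
    fix V assume V: "V \<in> En G - Cn Ran G"
    show "V \<in> En F - Cn Ran F"
    proof (rule ccontr)
      assume nV: "V \<notin> En F - Cn Ran F"
      have VD: "V \<in> Dom" using V wf_sysD(1)[OF G] by blast
      have PG: "PA G V \<subseteq> Dom - {V}" using V wf_sysD(2)[OF G] by blast
      have "\<forall>q\<in>PiE (PA G V) Ran. Fn G V q = s V"
      proof
        fix q assume "q \<in> PiE (PA G V) Ran"
        then obtain u where u: "u \<in> PiE (Dom - {V}) Ran" "restrict u (PA G V) = q"
          using ext1[OF _ PG ne'] by blast
        show "Fn G V q = s V" using B[OF VD nV u(1)] u(2) V by (simp add: rv_def)
      qed
      then have "V \<in> Cn Ran G" using V unfolding Cn_def by blast
      then show False using V by blast
    qed
  qed
  have 2: "En F - Cn Ran F \<subseteq> En G - Cn Ran G"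
  proof
    fix V assume V: "V \<in> En F - Cn Ran F"
    have PF: "PA F V \<subseteq> Dom - {V}" using V wf_sysD(2)[OF F] by blast
    have VG: "V \<in> En G"
    proof (rule ccontr)
      assume nV: "V \<notin> En G"
      have "\<forall>q\<in>PiE (PA F V) Ran. Fn F V q = s V"
      proof
        fix q assume "q \<in> PiE (PA F V) Ran"
        then obtain u where u: "u \<in> PiE (Dom - {V}) Ran" "restrict u (PA F V) = q"
          using ext1[OF _ PF ne'] by blast
        show "Fn F V q = s V" using A[OF V u(1)] u(2) nV by (simp add: rv_def)
      qed
      then have "V \<in> Cn Ran F" using V unfolding Cn_def by blast
      then show False using V by blast
    qed
    have "V \<notin> Cn Ran G"
    proof
      assume "V \<in> Cn Ran G"
      then obtain c where c: "\<forall>p\<in>PiE (PA G V) Ran. Fn G V p = c" unfolding Cn_def by blast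
      have PG: "PA G V \<subseteq> Dom - {V}" using VG wf_sysD(2)[OF G] by blast
      have "\<forall>q\<in>PiE (PA F V) Ran. Fn F V q = c"
      proof
        fix q assume "q \<in> PiE (PA F V) Ran"
        then obtain u where u: "u \<in> PiE (Dom - {V}) Ran" "restrict u (PA F V) = q"
          using ext1[OF _ PF ne'] by blast
        have "restrict u (PA G V) \<in> PiE (PA G V) Ran" using u(1) PG by (auto simp: PiE_iff)
        then show "Fn F V q = c" using A[OF V u(1)] u(2) VG c by (simp add: rv_def)
      qed
      then have "V \<in> Cn Ran F" using V unfolding Cn_def by blast
      then show False using V by blast
    qed
    then show "V \<in> En G - Cn Ran G" using VG by blast
  qed
  show "sim Ran G F"
    unfolding sim_def
  proof (intro conjI ballI)
    show "En G - Cn Ran G = En F - Cn Ran F" using 1 2 by blast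
    fix V assume V: "V \<in> En G - Cn Ran G"
    have PG: "PA G V \<subseteq> Dom - {V}" using V wf_sysD(2)[OF G] by blast
    have VF: "V \<in> En F - Cn Ran F" using V 1 by blast
    have PF: "PA F V \<subseteq> Dom - {V}" using VF wf_sysD(2)[OF F] by blast
    show "sim_fun Ran G F V"
      unfolding sim_fun_def
    proof (intro ballI impI)
      fix p q assume p: "p \<in> PiE (PA G V) Ran" and q: "q \<in> PiE (PA F V) Ran"
        and agr: "\<forall>X\<in>PA G V \<inter> PA F V. p X = q X"
      obtain u where u: "u \<in> PiE (Dom - {V}) Ran" "restrict u (PA G V) = p" "restrict u (PA F V) = q"
        using ext2[OF p q agr PG PF ne'] by blast
      show "Fn G V p = Fn F V q" using A[OF VF u(1)] u V by (simp add: rv_def)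
    qed
  qed
next
  assume sGF: "sim Ran G F"
  then have EC: "En G - Cn Ran G = En F - Cn Ran F" unfolding sim_def by blast
  show "(\<forall>V\<in>En F - Cn Ran F. \<forall>u\<in>PiE (Dom - {V}) Ran. rv G s u V = Fn F V (restrict u (PA F V)))
        \<and> (\<forall>V\<in>Dom - (En F - Cn Ran F). \<forall>u\<in>PiE (Dom - {V}) Ran. rv G s u V = s V)"
  proof (intro conjI ballI)
    fix V u assume V: "V \<in> En F - Cn Ran F" and u: "u \<in> PiE (Dom - {V}) Ran"
    have VG: "V \<in> En G - Cn Ran G" using V EC by blast
    have PG: "PA G V \<subseteq> Dom - {V}" using VG wf_sysD(2)[OF G] by blast
    have PF: "PA F V \<subseteq> Dom - {V}" using V wf_sysD(2)[OF F] by blast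
    have sf: "sim_fun Ran G F V" using sGF VG unfolding sim_def by blast
    have "restrict u (PA G V) \<in> PiE (PA G V) Ran" using u PG by (auto simp: PiE_iff)
    moreover have "restrict u (PA F V) \<in> PiE (PA F V) Ran" using u PF by (auto simp: PiE_iff)
    ultimately have "Fn G V (restrict u (PA G V)) = Fn F V (restrict u (PA F V))"
      using sf unfolding sim_fun_def by simp
    then show "rv G s u V = Fn F V (restrict u (PA F V))" using VG by (simp add: rv_def)
  next
    fix V u assume V: "V \<in> Dom - (En F - Cn Ran F)" and u: "u \<in> PiE (Dom - {V}) Ran"
    show "rv G s u V = s V"
    proof (cases "V \<in> En G")
      case False then show ?thesis by (simp add: rv_def)
    next
      case True
      then have "V \<in> Cn Ran G" using V EC by blast
      then obtain c where c: "\<forall>p\<in>PiE (PA G V) Ran. Fn G V p = c" unfolding Cn_def by blast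
      have PG: "PA G V \<subseteq> Dom - {V}" using True wf_sysD(2)[OF G] by blast
      have "restrict u (PA G V) \<in> PiE (PA G V) Ran" using u PG by (auto simp: PiE_iff)
      moreover have "restrict s (PA G V) \<in> PiE (PA G V) Ran" using s PG by (auto simp: PiE_iff)
      moreover have "s V = Fn G V (restrict s (PA G V))" using cs True unfolding compatible_def by blast
      ultimately show ?thesis using c True by (simp add: rv_def)
    qed
  qed
qed

lemma sat_Cf_Eq: "sat_g Dom Ran S (Cf xs (Eq V c)) \<longleftrightarrow>
   (\<not> consistent xs \<or> (\<forall>(s, G)\<in>S. interv_asg Dom Ran G xs s V = c))"
  by (auto simp: interv_g_def)

lemma consistent_graph: "set xs = (\<lambda>X. (X, u X)) ` A \<Longrightarrow> consistent xs"
  unfolding consistent_def by auto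

lemma gteamD: "gteam Dom Ran S \<Longrightarrow> (s, G) \<in> S \<Longrightarrow> wf_sys Dom Ran G \<and> s \<in> PiE Dom Ran \<and> compatible G s"
  unfolding gteam_def by blast

lemma sat_Imp: "sat_g Dom Ran S (Imp (Eq V v) (Cf xs (Eq V v))) \<longleftrightarrow>
   (\<forall>(s, G)\<in>S. s V = v \<longrightarrow> (\<not> consistent xs \<or> interv_asg Dom Ran G xs s V = v))"
proof
  assume "sat_g Dom Ran S (Imp (Eq V v) (Cf xs (Eq V v)))"
  then obtain T1 T2 where U: "T1 \<union> T2 = S" "sat_g Dom Ran T1 (Neg (Eq V v))" "sat_g Dom Ran T2 (Cf xs (Eq V v))"
    unfolding Imp_def by (simp only: sat_g.simps) blast
  have 1: "\<And>s G. (s, G) \<in> T1 \<Longrightarrow> s V \<noteq> v" using U(2) by fastforce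
  have 2: "\<not> consistent xs \<or> (\<forall>(s, G)\<in>T2. interv_asg Dom Ran G xs s V = v)" using U(3) by (simp only: sat_Cf_Eq)
  have "\<not> consistent xs \<or> interv_asg Dom Ran G xs s V = v" if sG: "(s, G) \<in> S" and sv: "s V = v" for s G
  proof -
    have "(s, G) \<notin> T1" using 1 sv by blast
    then have "(s, G) \<in> T2" using sG U(1) by blast
    then show ?thesis using 2 by blast
  qed
  then show "\<forall>(s, G)\<in>S. s V = v \<longrightarrow> (\<not> consistent xs \<or> interv_asg Dom Ran G xs s V = v)"
    by blast
next
  assume H: "\<forall>(s, G)\<in>S. s V = v \<longrightarrow> (\<not> consistent xs \<or> interv_asg Dom Ran G xs s V = v)"
  let ?T1 = "{p\<in>S. fst p V \<noteq> v}"
  let ?T2 = "{p\<in>S. fst p V = v}"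
  have 1: "sat_g Dom Ran ?T1 (Neg (Eq V v))" by simp
  have "\<not> consistent xs \<or> (\<forall>(s, G)\<in>?T2. interv_asg Dom Ran G xs s V = v)" using H by fastforce
  then have 2: "sat_g Dom Ran ?T2 (Cf xs (Eq V v))" by (simp only: sat_Cf_Eq)
  have 3: "?T1 \<union> ?T2 = S" by blast
  show "sat_g Dom Ran S (Imp (Eq V v) (Cf xs (Eq V v)))"
    unfolding Imp_def using 1 2 3 by (simp only: sat_g.simps) blast
qed

lemma sat_eta:
  fixes Dom :: "'v set" and Ran :: "'v \<Rightarrow> 'a set" and F :: "('v, 'a) sys"
    and S :: "(('v \<Rightarrow> 'a) \<times> ('v, 'a) sys) set"
  assumes sig: "wf_sig Dom Ran" and F: "wf_sys Dom Ran F" and V: "V \<in> En F" and S: "gteam Dom Ran S"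
  shows "sat_g Dom Ran S (eta Dom Ran F V) \<longleftrightarrow>
    (\<forall>(s, G)\<in>S. \<forall>u\<in>PiE (Dom - {V}) Ran. rv G s u V = Fn F V (restrict u (PA F V)))"
proof -
  let ?W = "Dom - (PA F V \<union> {V})"
  let ?P = "PA F V"
  have fD: "finite Dom" and fR: "\<forall>X\<in>Dom. finite (Ran X)" using sig unfolding wf_sig_def by auto
  have VD: "V \<in> Dom" using V wf_sysD(1)[OF F] by blast
  have PF: "?P \<subseteq> Dom - {V}" using V wf_sysD(2)[OF F] by blast
  have fW: "finite ?W" using fD by simp
  have fP: "finite ?P" using PF fD finite_subset by blast
  define xs where "xs = (\<lambda>(w::'v\<Rightarrow>'a) (p::'v\<Rightarrow>'a). ante ?W w @ ante ?P p)"
  define mg where "mg = (\<lambda>(w::'v\<Rightarrow>'a) (p::'v\<Rightarrow>'a) X. if X \<in> ?P then p X else w X)"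
  let ?E = "{Cf (ante ?W w @ ante ?P p) (Eq V (Fn F V p)) | w p. w \<in> PiE ?W Ran \<and> p \<in> PiE ?P Ran}"
  have finE: "finite ?E"
    apply (rule finite_image_set2)
    using fW fP fR PF by (auto intro!: finite_PiE)
  have mgP: "mg w p \<in> PiE (Dom - {V}) Ran" if "w \<in> PiE ?W Ran" "p \<in> PiE ?P Ran" for w p
    using that PF unfolding mg_def by (auto simp: PiE_iff extensional_def)
  have mgr: "restrict (mg w p) ?P = p" if "p \<in> PiE ?P Ran" for w p
    using that unfolding mg_def by (auto simp: PiE_iff extensional_def fun_eq_iff)
  have setxs: "set (xs w p) = (\<lambda>X. (X, mg w p X)) ` (Dom - {V})" for w p
    unfolding xs_def mg_def set_append set_ante[OF fW] set_ante[OF fP] using PF by auto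
  have one: "sat_g Dom Ran S (Cf (xs w p) (Eq V (Fn F V p))) \<longleftrightarrow>
      (\<forall>(s, G)\<in>S. rv G s (mg w p) V = Fn F V p)"
    if w: "w \<in> PiE ?W Ran" and p: "p \<in> PiE ?P Ran" for w p
  proof -
    have c: "consistent (xs w p)" using consistent_graph[OF setxs] .
    have eq: "interv_asg Dom Ran G (xs w p) s V = rv G s (mg w p) V" if "(s, G) \<in> S" for s G
    proof -
      from that have "wf_sys Dom Ran G" "s \<in> PiE Dom Ran" using gteamD[OF S] by blast+
      then show "interv_asg Dom Ran G (xs w p) s V = rv G s (mg w p) V"
        using interv_all_but[OF _ VD mgP[OF w p] setxs] by simp
    qed
    show ?thesis unfolding sat_Cf_Eq using c by (auto simp: eq)
  qed
  have "sat_g Dom Ran S (eta Dom Ran F V) \<longleftrightarrow> (\<forall>a\<in>?E. sat_g Dom Ran S a)"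
    unfolding eta_def by (rule sat_ConjSet[OF finE])
  also have "\<dots> \<longleftrightarrow> (\<forall>w\<in>PiE ?W Ran. \<forall>p\<in>PiE ?P Ran. sat_g Dom Ran S (Cf (xs w p) (Eq V (Fn F V p))))"
  proof
    assume H: "\<forall>a\<in>?E. sat_g Dom Ran S a"
    show "\<forall>w\<in>PiE ?W Ran. \<forall>p\<in>PiE ?P Ran. sat_g Dom Ran S (Cf (xs w p) (Eq V (Fn F V p)))"
    proof (intro ballI)
      fix w p assume "w \<in> PiE ?W Ran" "p \<in> PiE ?P Ran"
      then have "Cf (ante ?W w @ ante ?P p) (Eq V (Fn F V p)) \<in> ?E" by blast
      then show "sat_g Dom Ran S (Cf (xs w p) (Eq V (Fn F V p)))" using H unfolding xs_def by blast
    qed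
  next
    assume H: "\<forall>w\<in>PiE ?W Ran. \<forall>p\<in>PiE ?P Ran. sat_g Dom Ran S (Cf (xs w p) (Eq V (Fn F V p)))"
    show "\<forall>a\<in>?E. sat_g Dom Ran S a"
    proof
      fix a assume "a \<in> ?E"
      then obtain w p where a: "a = Cf (ante ?W w @ ante ?P p) (Eq V (Fn F V p))"
        "w \<in> PiE ?W Ran" "p \<in> PiE ?P Ran" by blast
      show "sat_g Dom Ran S a" using H a unfolding xs_def by blast
    qed
  qed
  also have "\<dots> \<longleftrightarrow> (\<forall>w\<in>PiE ?W Ran. \<forall>p\<in>PiE ?P Ran. \<forall>(s, G)\<in>S. rv G s (mg w p) V = Fn F V p)"
    by (intro ball_cong[OF refl] one) assumption+
  also have "\<dots> \<longleftrightarrow> (\<forall>(s, G)\<in>S. \<forall>u\<in>PiE (Dom - {V}) Ran. rv G s u V = Fn F V (restrict u ?P))"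
  proof
    assume H: "\<forall>w\<in>PiE ?W Ran. \<forall>p\<in>PiE ?P Ran. \<forall>(s, G)\<in>S. rv G s (mg w p) V = Fn F V p"
    show "\<forall>(s, G)\<in>S. \<forall>u\<in>PiE (Dom - {V}) Ran. rv G s u V = Fn F V (restrict u ?P)"
    proof (clarify)
      fix s G u assume sG: "(s, G) \<in> S" and u: "u \<in> PiE (Dom - {V}) Ran"
      have w: "restrict u ?W \<in> PiE ?W Ran" using u by (auto simp: PiE_iff)
      have p: "restrict u ?P \<in> PiE ?P Ran" using u PF by (auto simp: PiE_iff)
      have "mg (restrict u ?W) (restrict u ?P) = u"
        using u PF unfolding mg_def by (auto simp: PiE_iff extensional_def fun_eq_iff)
      then show "rv G s u V = Fn F V (restrict u ?P)" using H w p sG by fastforce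
    qed
  next
    assume H: "\<forall>(s, G)\<in>S. \<forall>u\<in>PiE (Dom - {V}) Ran. rv G s u V = Fn F V (restrict u ?P)"
    show "\<forall>w\<in>PiE ?W Ran. \<forall>p\<in>PiE ?P Ran. \<forall>(s, G)\<in>S. rv G s (mg w p) V = Fn F V p"
    proof (intro ballI, clarify)
      fix w p s G assume w: "w \<in> PiE ?W Ran" and p: "p \<in> PiE ?P Ran" and sG: "(s, G) \<in> S"
      show "rv G s (mg w p) V = Fn F V p" using H sG mgP[OF w p] mgr[OF p] by fastforce
    qed
  qed
  finally show ?thesis .
qed

lemma sat_xi:
  fixes Dom :: "'v set" and Ran :: "'v \<Rightarrow> 'a set"
    and S :: "(('v \<Rightarrow> 'a) \<times> ('v, 'a) sys) set"
  assumes sig: "wf_sig Dom Ran" and VD: "V \<in> Dom" and S: "gteam Dom Ran S"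
  shows "sat_g Dom Ran S (xi Dom Ran V) \<longleftrightarrow>
    (\<forall>(s, G)\<in>S. \<forall>u\<in>PiE (Dom - {V}) Ran. rv G s u V = s V)"
proof -
  have fD: "finite Dom" and fR: "\<forall>X\<in>Dom. finite (Ran X)" using sig unfolding wf_sig_def by auto
  let ?E = "{Imp (Eq V v) (Cf (ante (Dom - {V}) w) (Eq V v)) | v w. v \<in> Ran V \<and> w \<in> PiE (Dom - {V}) Ran}"
  have finE: "finite ?E"
    apply (rule finite_image_set2)
    using fD fR VD by (auto intro!: finite_PiE)
  have fW: "finite (Dom - {V})" using fD by simp
  have one: "sat_g Dom Ran S (Imp (Eq V v) (Cf (ante (Dom - {V}) w) (Eq V v))) \<longleftrightarrow>
      (\<forall>(s, G)\<in>S. s V = v \<longrightarrow> rv G s w V = v)"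
    if w: "w \<in> PiE (Dom - {V}) Ran" for v w
  proof -
    have setxs: "set (ante (Dom - {V}) w) = (\<lambda>X. (X, w X)) ` (Dom - {V})" using set_ante[OF fW] .
    have c: "consistent (ante (Dom - {V}) w)" using consistent_graph[OF setxs] .
    have eq: "interv_asg Dom Ran G (ante (Dom - {V}) w) s V = rv G s w V" if "(s, G) \<in> S" for s G
    proof -
      from that have "wf_sys Dom Ran G" "s \<in> PiE Dom Ran" using gteamD[OF S] by blast+
      then show "interv_asg Dom Ran G (ante (Dom - {V}) w) s V = rv G s w V"
        using interv_all_but[OF _ VD w setxs] by simp
    qed
    show ?thesis unfolding sat_Imp using c by (auto simp: eq)
  qed
  have "sat_g Dom Ran S (xi Dom Ran V) \<longleftrightarrow> (\<forall>a\<in>?E. sat_g Dom Ran S a)"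
    unfolding xi_def by (rule sat_ConjSet[OF finE])
  also have "\<dots> \<longleftrightarrow> (\<forall>v\<in>Ran V. \<forall>w\<in>PiE (Dom - {V}) Ran. sat_g Dom Ran S (Imp (Eq V v) (Cf (ante (Dom - {V}) w) (Eq V v))))"
  proof
    assume H: "\<forall>a\<in>?E. sat_g Dom Ran S a"
    show "\<forall>v\<in>Ran V. \<forall>w\<in>PiE (Dom - {V}) Ran. sat_g Dom Ran S (Imp (Eq V v) (Cf (ante (Dom - {V}) w) (Eq V v)))"
    proof (intro ballI)
      fix v w assume "v \<in> Ran V" "w \<in> PiE (Dom - {V}) Ran"
      then have "Imp (Eq V v) (Cf (ante (Dom - {V}) w) (Eq V v)) \<in> ?E" by blast
      then show "sat_g Dom Ran S (Imp (Eq V v) (Cf (ante (Dom - {V}) w) (Eq V v)))" using H by blast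
    qed
  next
    assume H: "\<forall>v\<in>Ran V. \<forall>w\<in>PiE (Dom - {V}) Ran. sat_g Dom Ran S (Imp (Eq V v) (Cf (ante (Dom - {V}) w) (Eq V v)))"
    show "\<forall>a\<in>?E. sat_g Dom Ran S a"
    proof
      fix a assume "a \<in> ?E"
      then obtain v w where a: "a = Imp (Eq V v) (Cf (ante (Dom - {V}) w) (Eq V v))"
        "v \<in> Ran V" "w \<in> PiE (Dom - {V}) Ran" by blast
      show "sat_g Dom Ran S a" using H a by blast
    qed
  qed
  also have "\<dots> \<longleftrightarrow> (\<forall>v\<in>Ran V. \<forall>w\<in>PiE (Dom - {V}) Ran. \<forall>(s, G)\<in>S. s V = v \<longrightarrow> rv G s w V = v)"
    by (intro ball_cong[OF refl] one) assumption+
  also have "\<dots> \<longleftrightarrow> (\<forall>(s, G)\<in>S. \<forall>u\<in>PiE (Dom - {V}) Ran. rv G s u V = s V)"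
  proof
    assume H: "\<forall>v\<in>Ran V. \<forall>w\<in>PiE (Dom - {V}) Ran. \<forall>(s, G)\<in>S. s V = v \<longrightarrow> rv G s w V = v"
    show "\<forall>(s, G)\<in>S. \<forall>u\<in>PiE (Dom - {V}) Ran. rv G s u V = s V"
    proof (clarify)
      fix s G u assume sG: "(s, G) \<in> S" and u: "u \<in> PiE (Dom - {V}) Ran"
      have "s V \<in> Ran V" using gteamD[OF S sG] VD by (auto simp: PiE_iff)
      then show "rv G s u V = s V" using H sG u by fastforce
    qed
  next
    assume H: "\<forall>(s, G)\<in>S. \<forall>u\<in>PiE (Dom - {V}) Ran. rv G s u V = s V"
    then show "\<forall>v\<in>Ran V. \<forall>w\<in>PiE (Dom - {V}) Ran. \<forall>(s, G)\<in>S. s V = v \<longrightarrow> rv G s w V = v"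
      by fastforce
  qed
  finally show ?thesis .
qed

lemma swapq: "((\<forall>V\<in>A. \<forall>(s, G)\<in>S. P V s G) \<and> (\<forall>V\<in>B. \<forall>(s, G)\<in>S. Q V s G))
  \<longleftrightarrow> (\<forall>(s, G)\<in>S. (\<forall>V\<in>A. P V s G) \<and> (\<forall>V\<in>B. Q V s G))"
  by fast

lemma ballp_cong: "(\<And>s G. (s, G) \<in> S \<Longrightarrow> P s G \<longleftrightarrow> Q s G) \<Longrightarrow>
  (\<forall>(s, G)\<in>S. P s G) \<longleftrightarrow> (\<forall>(s, G)\<in>S. Q s G)"
  by fast

lemma ballp_conj: "((\<forall>(s, G)\<in>S. P s G) \<and> (\<forall>(s, G)\<in>S. Q s G)) \<longleftrightarrow> (\<forall>(s, G)\<in>S. P s G \<and> Q s G)"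
  by fast

lemma sat_Phi:
  assumes sig: "wf_sig Dom Ran" and F: "wf_sys Dom Ran F" and S: "gteam Dom Ran S"
  shows "sat_g Dom Ran S (Phi Dom Ran F) \<longleftrightarrow> (\<forall>(s, G)\<in>S. sim Ran G F)"
proof -
  let ?EC = "En F - Cn Ran F"
  have fD: "finite Dom" using sig unfolding wf_sig_def by blast
  have ECD: "?EC \<subseteq> Dom" using wf_sysD(1)[OF F] by blast
  have f1: "finite (eta Dom Ran F ` ?EC)" using finite_subset[OF ECD fD] by (rule finite_imageI)
  have f2: "finite (xi Dom Ran ` (Dom - ?EC))" using fD by simp
  have "sat_g Dom Ran S (Phi Dom Ran F) \<longleftrightarrow>
      (\<forall>V\<in>?EC. sat_g Dom Ran S (eta Dom Ran F V)) \<and> (\<forall>V\<in>Dom - ?EC. sat_g Dom Ran S (xi Dom Ran V))"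
    unfolding Phi_def sat_g.simps(3) sat_ConjSet[OF f1] sat_ConjSet[OF f2] by simp
  also have "\<dots> \<longleftrightarrow>
      (\<forall>V\<in>?EC. \<forall>(s, G)\<in>S. \<forall>u\<in>PiE (Dom - {V}) Ran. rv G s u V = Fn F V (restrict u (PA F V)))
    \<and> (\<forall>V\<in>Dom - ?EC. \<forall>(s, G)\<in>S. \<forall>u\<in>PiE (Dom - {V}) Ran. rv G s u V = s V)"
  proof -
    have a: "sat_g Dom Ran S (eta Dom Ran F V) \<longleftrightarrow> (\<forall>(s, G)\<in>S. \<forall>u\<in>PiE (Dom - {V}) Ran. rv G s u V = Fn F V (restrict u (PA F V)))"
      if "V \<in> ?EC" for V using that by (intro sat_eta[OF sig F _ S]) blast
    have b: "sat_g Dom Ran S (xi Dom Ran V) \<longleftrightarrow> (\<forall>(s, G)\<in>S. \<forall>u\<in>PiE (Dom - {V}) Ran. rv G s u V = s V)"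
      if "V \<in> Dom - ?EC" for V using that by (intro sat_xi[OF sig _ S]) blast
    show ?thesis
      by (intro conj_cong ball_cong[OF refl] a b) assumption+
  qed
  also have "\<dots> \<longleftrightarrow> (\<forall>(s, G)\<in>S.
      (\<forall>V\<in>?EC. \<forall>u\<in>PiE (Dom - {V}) Ran. rv G s u V = Fn F V (restrict u (PA F V)))
    \<and> (\<forall>V\<in>Dom - ?EC. \<forall>u\<in>PiE (Dom - {V}) Ran. rv G s u V = s V))"
    by (rule swapq)
  also have "\<dots> \<longleftrightarrow> (\<forall>(s, G)\<in>S. sim Ran G F)"
  proof -
    have "((\<forall>V\<in>?EC. \<forall>u\<in>PiE (Dom - {V}) Ran. rv G s u V = Fn F V (restrict u (PA F V)))
    \<and> (\<forall>V\<in>Dom - ?EC. \<forall>u\<in>PiE (Dom - {V}) Ran. rv G s u V = s V)) \<longleftrightarrow> sim Ran G F"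
      if "(s, G) \<in> S" for s G
      using gteamD[OF S that] by (intro point_char[OF sig F]) blast+
    then show ?thesis by (rule ballp_cong)
  qed
  finally show ?thesis .
qed

lemma sat_desc: "finite Dom \<Longrightarrow> sat_g Dom Ran S (ConjSet Dom Ran ((\<lambda>V. Eq V (t V)) ` Dom))
   \<longleftrightarrow> (\<forall>V\<in>Dom. \<forall>(s, G)\<in>S. s V = t V)"
  by (simp add: sat_ConjSet)

lemma sat_Theta:
  assumes sig: "wf_sig Dom Ran" and Tm: "Tm \<subseteq> PiE Dom Ran" and S: "\<forall>(s, G)\<in>S. s \<in> PiE Dom Ran"
  shows "sat_g Dom Ran S (Theta Dom Ran Tm) \<longleftrightarrow> (\<forall>(s, G)\<in>S. s \<in> Tm)"
proof -
  have fD: "finite Dom" and fR: "\<forall>X\<in>Dom. finite (Ran X)" using sig unfolding wf_sig_def by auto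
  have "finite (PiE Dom Ran)" using fD fR by (intro finite_PiE) auto
  then have fT: "finite Tm" by (rule finite_subset[OF Tm])
  define D where "D = (\<lambda>t. ConjSet Dom Ran ((\<lambda>V. Eq V (t V)) ` Dom))"
  have fDT: "finite (D ` Tm)" by (rule finite_imageI[OF fT])
  have sl: "set (list_of (D ` Tm)) = D ` Tm" using list_of_set[OF fDT] .
  have sD: "\<And>S t. sat_g Dom Ran S (D t) \<longleftrightarrow> (\<forall>V\<in>Dom. \<forall>(s, G)\<in>S. s V = t V)"
    unfolding D_def by (rule sat_desc[OF fD])
  have fl: "\<forall>f\<in>set (list_of (D ` Tm)). \<forall>S. sat_g Dom Ran S f \<longleftrightarrow> (\<forall>p\<in>S. sat_g Dom Ran {p} f)"
    unfolding sl by (auto simp: sD)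
  have "sat_g Dom Ran S (Theta Dom Ran Tm) \<longleftrightarrow> (\<forall>p\<in>S. \<exists>f\<in>D ` Tm. sat_g Dom Ran {p} f)"
    unfolding Theta_def DisjSet_def D_def[symmetric] using sat_BigDisj[OF fl] sl by simp
  also have "\<dots> \<longleftrightarrow> (\<forall>p\<in>S. \<exists>t\<in>Tm. \<forall>V\<in>Dom. fst p V = t V)"
  proof -
    have sp: "sat_g Dom Ran {p} (D t) \<longleftrightarrow> (\<forall>V\<in>Dom. fst p V = t V)" for p t
      using sD[of "{p}" t] by (cases p) simp
    have "(\<exists>f\<in>D ` Tm. sat_g Dom Ran {p} f) \<longleftrightarrow> (\<exists>t\<in>Tm. \<forall>V\<in>Dom. fst p V = t V)" for p
      using sp by blast
    then show ?thesis by blast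
  qed
  also have "\<dots> \<longleftrightarrow> (\<forall>(s, G)\<in>S. s \<in> Tm)"
  proof
    assume H: "\<forall>p\<in>S. \<exists>t\<in>Tm. \<forall>V\<in>Dom. fst p V = t V"
    show "\<forall>(s, G)\<in>S. s \<in> Tm"
    proof (clarify)
      fix s G assume sG: "(s, G) \<in> S"
      then obtain t where t: "t \<in> Tm" "\<forall>V\<in>Dom. s V = t V" using H by fastforce
      have "s = t" using PiE_ext[of s Dom Ran t] sG S t Tm by blast
      then show "s \<in> Tm" using t by simp
    qed
  next
    assume "\<forall>(s, G)\<in>S. s \<in> Tm"
    then show "\<forall>p\<in>S. \<exists>t\<in>Tm. \<forall>V\<in>Dom. fst p V = t V" by fastforce
  qed
  finally show ?thesis .
qed

lemma main_char:
  assumes sig: "wf_sig Dom Ran" and F: "wf_sys Dom Ran F" and S: "gteam Dom Ran S"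
    and Tm: "Tm \<subseteq> PiE Dom Ran"
  shows "sat_g Dom Ran S (Conj (Theta Dom Ran Tm) (Phi Dom Ran F)) \<longleftrightarrow> (\<forall>(s, G)\<in>S. s \<in> Tm \<and> sim Ran G F)"
proof -
  have S': "\<forall>(s, G)\<in>S. s \<in> PiE Dom Ran" using S unfolding gteam_def by blast
  show ?thesis
    unfolding sat_g.simps(3) sat_Theta[OF sig Tm S'] sat_Phi[OF sig F S] by (rule ballp_conj)
qed

theorem lemma4p8:
  fixes Dom :: "'v set" and Ran :: "'v \<Rightarrow> 'a set" and F :: "('v, 'a) sys"
  assumes "wf_sig Dom Ran"
    and "wf_sys Dom Ran F"
  shows "(\<forall>S T. gteam Dom Ran S \<and> gteam Dom Ran T \<and> uniform Ran T \<and> T = restr_sim Ran T F \<longrightarrow>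
            (sat_g Dom Ran S (Conj (Theta Dom Ran (tminus T)) (Phi Dom Ran F))
             \<longleftrightarrow> preceq_g Dom Ran S T))
       \<and> (\<forall>Sm G Tm. cteam Dom Ran (Sm, G) \<and> cteam Dom Ran (Tm, F) \<longrightarrow>
            (sat_c Dom Ran (Sm, G) (Conj (Theta Dom Ran Tm) (Phi Dom Ran F))
             \<longleftrightarrow> preceq_c Ran (Sm, G) (Tm, F)))"
proof (intro conjI allI impI)
  note sig = assms(1) and Fw = assms(2)
  fix S T
  assume H: "gteam Dom Ran S \<and> gteam Dom Ran T \<and> uniform Ran T \<and> T = restr_sim Ran T F"
  then have S: "gteam Dom Ran S" and T: "gteam Dom Ran T" and TF: "T = restr_sim Ran T F" by blast+
  have Tm: "tminus T \<subseteq> PiE Dom Ran"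
  proof
    fix s assume "s \<in> tminus T"
    then obtain H where "(s, H) \<in> T" unfolding tminus_def by force
    then show "s \<in> PiE Dom Ran" using gteamD[OF T] by blast
  qed
  have hT: "\<And>t H. (t, H) \<in> T \<Longrightarrow> sim Ran H F \<and> wf_sys Dom Ran H"
  proof -
    fix t H assume tH: "(t, H) \<in> T"
    then have "(t, H) \<in> restr_sim Ran T F" using TF by simp
    then show "sim Ran H F \<and> wf_sys Dom Ran H" using gteamD[OF T tH] unfolding restr_sim_def by blast
  qed
  have char: "sat_g Dom Ran S (Conj (Theta Dom Ran (tminus T)) (Phi Dom Ran F)) \<longleftrightarrow>
     (\<forall>(s, G)\<in>S. s \<in> tminus T \<and> sim Ran G F)"
    by (rule main_char[OF sig Fw S Tm])
  show "sat_g Dom Ran S (Conj (Theta Dom Ran (tminus T)) (Phi Dom Ran F)) \<longleftrightarrow> preceq_g Dom Ran S T"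
  proof
    assume "sat_g Dom Ran S (Conj (Theta Dom Ran (tminus T)) (Phi Dom Ran F))"
    then have C: "\<And>s G. (s, G) \<in> S \<Longrightarrow> s \<in> tminus T \<and> sim Ran G F" using char by blast
    define R where "R = {(t, H) \<in> T. t \<in> tminus S}"
    have RT: "R \<subseteq> T" unfolding R_def by blast
    have "approx_g Dom Ran S R"
      unfolding approx_g_def
    proof (intro allI impI)
      fix F' assume F': "wf_sys Dom Ran F'"
      show "tminus (restr_sim Ran S F') = tminus (restr_sim Ran R F')"
      proof (cases "sim Ran F F'")
        case True
        have "restr_sim Ran S F' = S"
        proof -
          have "sim Ran G F'" if "(s, G) \<in> S" for s G
            using sim_trans[OF sig Fw _ True] C[OF that] by blast
          then show ?thesis unfolding restr_sim_def by blast
        qed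
        moreover have "restr_sim Ran R F' = R"
        proof -
          have "sim Ran H F'" if "(t, H) \<in> R" for t H
            using sim_trans[OF sig Fw _ True] hT[of t H] that RT by blast
          then show ?thesis unfolding restr_sim_def by blast
        qed
        moreover have "tminus R = tminus S"
        proof
          show "tminus R \<subseteq> tminus S" unfolding R_def tminus_def by force
          show "tminus S \<subseteq> tminus R"
          proof
            fix s assume sS: "s \<in> tminus S"
            then obtain G where "(s, G) \<in> S" unfolding tminus_def by force
            then have "s \<in> tminus T" using C by blast
            then obtain H where "(s, H) \<in> T" unfolding tminus_def by force
            then have "(s, H) \<in> R" unfolding R_def using sS by blast
            then show "s \<in> tminus R" unfolding tminus_def by force
          qed
        qed
        ultimately show ?thesis by simp
      next
        case False
        have "restr_sim Ran S F' = {}"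
        proof -
          have "\<not> sim Ran G F'" if "(s, G) \<in> S" for s G
          proof
            assume "sim Ran G F'"
            then have "sim Ran F F'" using sim_trans[OF sig gteamD[OF S that, THEN conjunct1] sim_sym] C[OF that] by blast
            then show False using False by blast
          qed
          then show ?thesis unfolding restr_sim_def by blast
        qed
        moreover have "restr_sim Ran R F' = {}"
        proof -
          have "\<not> sim Ran H F'" if "(t, H) \<in> R" for t H
          proof
            assume "sim Ran H F'"
            have h: "sim Ran H F \<and> wf_sys Dom Ran H" using hT[of t H] that RT by blast
            then have "sim Ran F F'" using sim_trans[OF sig _ sim_sym] \<open>sim Ran H F'\<close> by blast
            then show False using False by blast
          qed
          then show ?thesis unfolding restr_sim_def by blast
        qed
        ultimately show ?thesis by simp
      qed
    qed
    then show "preceq_g Dom Ran S T" unfolding preceq_g_def using RT by blast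
  next
    assume "preceq_g Dom Ran S T"
    then consider "S = {}" | R where "R \<subseteq> T" "approx_g Dom Ran S R" unfolding preceq_g_def by blast
    then show "sat_g Dom Ran S (Conj (Theta Dom Ran (tminus T)) (Phi Dom Ran F))"
    proof cases
      case 1 then show ?thesis using sat_g_empty by metis
    next
      case 2
      have "s \<in> tminus T \<and> sim Ran G F" if sG: "(s, G) \<in> S" for s G
      proof -
        have G: "wf_sys Dom Ran G" using gteamD[OF S sG] by blast
        have "s \<in> tminus (restr_sim Ran S G)" using sG sim_refl[of Ran G] unfolding restr_sim_def tminus_def by force
        then have "s \<in> tminus (restr_sim Ran R G)" using 2(2) G unfolding approx_g_def by blast
        then obtain H where sH: "(s, H) \<in> R" "sim Ran H G" unfolding restr_sim_def tminus_def by force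
        have h: "sim Ran H F \<and> wf_sys Dom Ran H" using hT[of s H] sH 2(1) by blast
        have "sim Ran G F" using sim_trans[OF sig _ sim_sym[OF sH(2)]] h by blast
        moreover have "s \<in> tminus T" using sH 2(1) unfolding tminus_def by force
        ultimately show ?thesis by blast
      qed
      then show ?thesis using char by blast
    qed
  qed
next
  note sig = assms(1) and Fw = assms(2)
  fix Sm G Tm
  assume H: "cteam Dom Ran (Sm, G) \<and> cteam Dom Ran (Tm, F)"
  have S: "gteam Dom Ran ((\<lambda>s. (s, G)) ` Sm)" using H unfolding cteam_def gteam_def by auto
  have Tm: "Tm \<subseteq> PiE Dom Ran" using H unfolding cteam_def by auto
  have "sat_c Dom Ran (Sm, G) (Conj (Theta Dom Ran Tm) (Phi Dom Ran F)) \<longleftrightarrow>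
      (\<forall>(s, G')\<in>(\<lambda>s. (s, G)) ` Sm. s \<in> Tm \<and> sim Ran G' F)"
    unfolding sat_c_g by (rule main_char[OF sig Fw S Tm])
  also have "\<dots> \<longleftrightarrow> Sm \<subseteq> Tm \<and> (Sm \<noteq> {} \<longrightarrow> sim Ran G F)" by blast
  also have "\<dots> \<longleftrightarrow> preceq_c Ran (Sm, G) (Tm, F)"
    unfolding preceq_c_def approx_c_def by auto
  finally show "sat_c Dom Ran (Sm, G) (Conj (Theta Dom Ran Tm) (Phi Dom Ran F)) \<longleftrightarrow> preceq_c Ran (Sm, G) (Tm, F)" .
qed

end
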